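(* Let $G=(V,E)$ be a finite simple graph of order $n$ and let $(x,z)$ be an optimal solution of the Fort Number Model $\mathrm{FN}(G)$. Then $\mathrm{ft}(G)=\sum_{i=1}^n z_i$.
   Context: $N(u)$ denotes the neighborhood of $u$. A fort of $G$ is a non-empty set $F\subseteq V$ such that no vertex $u\in V\setminus F$ has exactly one neighbor in $F$. The fort number $\mathrm{ft}(G)$ is the maximum cardinality of a collection of pairwise disjoint forts of $G$. The Fort Number Model $\mathrm{FN}(G)$ has binary variables $x_{iv}$ ($i\in\{1,\dots,n\}$, $v\in V$) and $z_i$ ($i\in\{1,\dots,n\}$), with constraints: $z_i-\sum_{u\in V}x_{iu}\leq0$ for all $i$; $x_{iu}-x_{iv}+\sum_{w\in N(u)\setminus\{v\}}x_{iw}\geq0$ for all $i$, all $v\in V$ and all $u\in N(v)$; $\sum_{i=1}^n x_{iu}\leq1$ for all $u\in V$; its objective is to maximize $\sum_{i=1}^n z_i$. *)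

theory Defs
  imports Main
begin

definition simple_graph :: "'a set \<Rightarrow> ('a \<Rightarrow> 'a \<Rightarrow> bool) \<Rightarrow> bool" where
  "simple_graph V E \<longleftrightarrow> finite V \<and> (\<forall>u v. E u v \<longrightarrow> u \<in> V \<and> v \<in> V)
     \<and> (\<forall>u v. E u v \<longrightarrow> E v u) \<and> (\<forall>u. \<not> E u u)"

definition nbhd :: "'a set \<Rightarrow> ('a \<Rightarrow> 'a \<Rightarrow> bool) \<Rightarrow> 'a \<Rightarrow> 'a set" where
  "nbhd V E u = {w \<in> V. E u w}"

definition is_fort :: "'a set \<Rightarrow> ('a \<Rightarrow> 'a \<Rightarrow> bool) \<Rightarrow> 'a set \<Rightarrow> bool" where
  "is_fort V E F \<longleftrightarrow> F \<noteq> {} \<and> F \<subseteq> V \<and>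
     (\<forall>u \<in> V - F. card (nbhd V E u \<inter> F) \<noteq> 1)"

definition disjoint_fort_collection :: "'a set \<Rightarrow> ('a \<Rightarrow> 'a \<Rightarrow> bool) \<Rightarrow> 'a set set \<Rightarrow> bool" where
  "disjoint_fort_collection V E C \<longleftrightarrow> (\<forall>F \<in> C. is_fort V E F)
     \<and> (\<forall>F1 \<in> C. \<forall>F2 \<in> C. F1 \<noteq> F2 \<longrightarrow> F1 \<inter> F2 = {})"

definition fort_number :: "'a set \<Rightarrow> ('a \<Rightarrow> 'a \<Rightarrow> bool) \<Rightarrow> nat" where
  "fort_number V E = Max {card C | C. disjoint_fort_collection V E C}"

definition FN_feasible :: "'a set \<Rightarrow> ('a \<Rightarrow> 'a \<Rightarrow> bool) \<Rightarrow> (nat \<Rightarrow> 'a \<Rightarrow> int) \<Rightarrow> (nat \<Rightarrow> int) \<Rightarrow> bool" where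
  "FN_feasible V E x z \<longleftrightarrow>
     (\<forall>i \<in> {1..card V}. \<forall>v \<in> V. x i v \<in> {0, 1}) \<and>
     (\<forall>i \<in> {1..card V}. z i \<in> {0, 1}) \<and>
     (\<forall>i \<in> {1..card V}. z i - (\<Sum>u\<in>V. x i u) \<le> 0) \<and>
     (\<forall>i \<in> {1..card V}. \<forall>v \<in> V. \<forall>u \<in> nbhd V E v.
        x i u - x i v + (\<Sum>w \<in> nbhd V E u - {v}. x i w) \<ge> 0) \<and>
     (\<forall>u \<in> V. (\<Sum>i=1..card V. x i u) \<le> 1)"

definition FN_objective :: "'a set \<Rightarrow> (nat \<Rightarrow> int) \<Rightarrow> int" where
  "FN_objective V z = (\<Sum>i=1..card V. z i)"

definition FN_optimal :: "'a set \<Rightarrow> ('a \<Rightarrow> 'a \<Rightarrow> bool) \<Rightarrow> (nat \<Rightarrow> 'a \<Rightarrow> int) \<Rightarrow> (nat \<Rightarrow> int) \<Rightarrow> bool" where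
  "FN_optimal V E x z \<longleftrightarrow> FN_feasible V E x z \<and>
     (\<forall>x' z'. FN_feasible V E x' z' \<longrightarrow> FN_objective V z' \<le> FN_objective V z)"

end

theory Submission
  imports Defs
begin

lemma sum_ind_card:
  assumes "finite A"
  shows "(\<Sum>i\<in>A. if P i then (1::int) else 0) = int (card {i\<in>A. P i})"
proof -
  have "(\<Sum>i\<in>A. if P i then (1::int) else 0) = (\<Sum>i\<in>{i\<in>A. P i}. 1)"
    using sum.inter_filter[OF assms, of "\<lambda>_. (1::int)" P] by simp
  then show ?thesis by simp
qed

lemma coll_bound:
  assumes fin: "finite V" and C: "disjoint_fort_collection V E C"
  shows "finite C \<and> card C \<le> card V"
proof -
  have forts: "F \<noteq> {} \<and> F \<subseteq> V" if "F \<in> C" for F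
    using C that unfolding disjoint_fort_collection_def is_fort_def by blast
  have disj: "F1 \<inter> F2 = {}" if "F1 \<in> C" "F2 \<in> C" "F1 \<noteq> F2" for F1 F2
    using C that unfolding disjoint_fort_collection_def by blast
  have "C \<subseteq> Pow V" using forts by blast
  hence finC: "finite C" using fin by (simp add: finite_subset)
  define g where "g F = (SOME v. v \<in> F)" for F :: "'a set"
  have g: "g F \<in> F" if "F \<in> C" for F
  proof -
    have "\<exists>v. v \<in> F" using forts[OF that] by blast
    then show ?thesis unfolding g_def by (rule someI_ex)
  qed
  have inj: "inj_on g C"
  proof (rule inj_onI)
    fix F1 F2 assume a: "F1 \<in> C" "F2 \<in> C" "g F1 = g F2"
    show "F1 = F2"
    proof (rule ccontr)
      assume "F1 \<noteq> F2"
      hence "F1 \<inter> F2 = {}" using disj a by simp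
      moreover have "g F1 \<in> F1 \<inter> F2" using g[OF a(1)] g[OF a(2)] a(3) by simp
      ultimately show False by simp
    qed
  qed
  have sub: "g ` C \<subseteq> V" using g forts by blast
  have "card C \<le> card V" by (rule card_inj_on_le[OF inj sub fin])
  with finC show ?thesis by simp
qed

lemma fn_set_finite:
  assumes "finite V"
  shows "finite {card C | C. disjoint_fort_collection V E C}"
proof -
  have "{card C | C. disjoint_fort_collection V E C} \<subseteq> {0..card V}"
  proof
    fix k assume "k \<in> {card C | C. disjoint_fort_collection V E C}"
    then obtain C where "k = card C" "disjoint_fort_collection V E C" by blast
    then show "k \<in> {0..card V}" using coll_bound[OF assms, of E C] by simp
  qed
  then show ?thesis by (rule finite_subset) simp
qed

lemma fn_ge:
  assumes fin: "finite V" and C: "disjoint_fort_collection V E C"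
  shows "card C \<le> fort_number V E"
  unfolding fort_number_def using C
  by (intro Max_ge[OF fn_set_finite[OF fin]]) blast

lemma fn_in:
  assumes fin: "finite V"
  shows "\<exists>C. disjoint_fort_collection V E C \<and> card C = fort_number V E"
proof -
  have "disjoint_fort_collection V E {}" by (simp add: disjoint_fort_collection_def)
  hence "{card C | C. disjoint_fort_collection V E C} \<noteq> {}" by blast
  from Max_in[OF fn_set_finite[OF fin] this] show ?thesis
    unfolding fort_number_def by auto
qed


lemma feasible_le_fn:
  assumes G: "simple_graph V E" and feas: "FN_feasible V E x z"
  shows "(\<Sum>i=1..card V. z i) \<le> int (fort_number V E)"
proof -
  let ?n = "card V"
  have fin: "finite V" using G unfolding simple_graph_def by blast
  have x01: "\<And>i v. i \<in> {1..?n} \<Longrightarrow> v \<in> V \<Longrightarrow> x i v \<in> {0,1}"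
    and z01: "\<And>i. i \<in> {1..?n} \<Longrightarrow> z i \<in> {0,1}"
    and zle: "\<And>i. i \<in> {1..?n} \<Longrightarrow> z i - (\<Sum>u\<in>V. x i u) \<le> 0"
    and nb: "\<And>i v u. i \<in> {1..?n} \<Longrightarrow> v \<in> V \<Longrightarrow> u \<in> nbhd V E v \<Longrightarrow>
        x i u - x i v + (\<Sum>w \<in> nbhd V E u - {v}. x i w) \<ge> 0"
    and col: "\<And>u. u \<in> V \<Longrightarrow> (\<Sum>i=1..?n. x i u) \<le> 1"
    using feas unfolding FN_feasible_def by blast+
  have xnn: "\<And>i v. i \<in> {1..?n} \<Longrightarrow> v \<in> V \<Longrightarrow> 0 \<le> x i v"
    using x01 by fastforce
  define F where "F i = {v \<in> V. x i v = 1}" for i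
  define I where "I = {i \<in> {1..?n}. z i = 1}"
  have Ine: "\<And>i. i \<in> I \<Longrightarrow> F i \<noteq> {}"
  proof
    fix i assume i: "i \<in> I" and e: "F i = {}"
    have "\<And>u. u \<in> V \<Longrightarrow> x i u = 0" using x01 i e unfolding I_def F_def by blast
    hence "(\<Sum>u\<in>V. x i u) = 0" by simp
    with zle[of i] i show False unfolding I_def by simp
  qed
  have two: False if "i \<in> {1..?n}" "j \<in> {1..?n}" "i \<noteq> j" "v \<in> F i" "v \<in> F j" for i j v
  proof -
    have v: "v \<in> V" "x i v = 1" "x j v = 1" using that unfolding F_def by auto
    have "(\<Sum>k\<in>{i,j}. x k v) \<le> (\<Sum>k=1..?n. x k v)"
      by (rule sum_mono2) (use that xnn v in auto)
    moreover have "(\<Sum>k\<in>{i,j}. x k v) = 2" using v that by simp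
    ultimately show False using col[OF v(1)] by simp
  qed
  have fort: "is_fort V E (F i)" if i: "i \<in> I" for i
    unfolding is_fort_def
  proof (intro conjI ballI)
    show "F i \<noteq> {}" using Ine[OF i] .
    show "F i \<subseteq> V" unfolding F_def by blast
    fix u assume u: "u \<in> V - F i"
    show "card (nbhd V E u \<inter> F i) \<noteq> 1"
    proof
      assume "card (nbhd V E u \<inter> F i) = 1"
      then obtain v where vv: "nbhd V E u \<inter> F i = {v}" by (meson card_1_singletonE)
      have iI: "i \<in> {1..?n}" using i unfolding I_def by blast
      have vV: "v \<in> V" "x i v = 1" "E u v" using vv unfolding F_def nbhd_def by auto
      have "E v u" using vV G unfolding simple_graph_def by blast
      hence un: "u \<in> nbhd V E v" using u unfolding nbhd_def by blast
      have xu: "x i u = 0" using x01[OF iI] u unfolding F_def by blast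
      have "\<And>w. w \<in> nbhd V E u - {v} \<Longrightarrow> x i w = 0"
      proof -
        fix w assume w: "w \<in> nbhd V E u - {v}"
        hence "w \<notin> F i" using vv by blast
        moreover have "w \<in> V" using w unfolding nbhd_def by blast
        ultimately show "x i w = 0" using x01[OF iI] unfolding F_def by blast
      qed
      hence "(\<Sum>w \<in> nbhd V E u - {v}. x i w) = 0" by simp
      with nb[OF iI vV(1) un] xu vV show False by simp
    qed
  qed
  define C where "C = F ` I"
  have dfc: "disjoint_fort_collection V E C"
    unfolding disjoint_fort_collection_def C_def
  proof (intro conjI ballI impI)
    fix A assume "A \<in> F ` I" then show "is_fort V E A" using fort by blast
  next
    fix A B assume A: "A \<in> F ` I" and B: "B \<in> F ` I" and ne: "A \<noteq> B"
    then obtain i j where "i \<in> I" "j \<in> I" "A = F i" "B = F j" by blast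
    moreover have "i \<noteq> j" using calculation ne by blast
    ultimately show "A \<inter> B = {}" using two unfolding I_def by blast
  qed
  have inj: "inj_on F I"
  proof (rule inj_onI)
    fix i j assume i: "i \<in> I" and j: "j \<in> I" and e: "F i = F j"
    show "i = j"
    proof (rule ccontr)
      assume "i \<noteq> j"
      obtain v where "v \<in> F i" using Ine[OF i] by blast
      then show False using two[of i j v] i j e \<open>i \<noteq> j\<close> unfolding I_def by blast
    qed
  qed
  have "(\<Sum>i=1..?n. z i) = (\<Sum>i=1..?n. if z i = 1 then 1 else 0)"
    by (rule sum.cong) (use z01 in auto)
  also have "\<dots> = int (card I)" unfolding I_def by (rule sum_ind_card) simp
  finally have eq: "(\<Sum>i=1..?n. z i) = int (card I)" .
  have "card I = card C" unfolding C_def using card_image[OF inj] by simp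
  moreover have "card C \<le> fort_number V E" using fn_ge[OF fin dfc] .
  ultimately show ?thesis using eq by simp
qed

lemma fn_le_feasible:
  assumes G: "simple_graph V E"
  shows "\<exists>x z. FN_feasible V E x z \<and> int (fort_number V E) = (\<Sum>i=1..card V. z i)"
proof -
  let ?n = "card V"
  have fin: "finite V" using G unfolding simple_graph_def by blast
  obtain C where C: "disjoint_fort_collection V E C" and cC: "card C = fort_number V E"
    using fn_in[OF fin] by blast
  define k where "k = card C"
  have finC: "finite C" and kn: "k \<le> ?n" using coll_bound[OF fin C] unfolding k_def by auto
  obtain f where f: "bij_betw f {1..k} C" using ex_bij_betw_nat_finite_1[OF finC] unfolding k_def by blast
  have forts: "\<And>i. i \<in> {1..k} \<Longrightarrow> is_fort V E (f i)"
    using f C unfolding bij_betw_def disjoint_fort_collection_def by blast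
  have disj: "\<And>i j. i \<in> {1..k} \<Longrightarrow> j \<in> {1..k} \<Longrightarrow> i \<noteq> j \<Longrightarrow> f i \<inter> f j = {}"
  proof -
    fix i j assume "i \<in> {1..k}" "j \<in> {1..k}" "i \<noteq> j"
    moreover have "f i \<noteq> f j" using f calculation unfolding bij_betw_def inj_on_def by blast
    ultimately show "f i \<inter> f j = {}"
      using f C unfolding bij_betw_def disjoint_fort_collection_def by blast
  qed
  define x :: "nat \<Rightarrow> 'a \<Rightarrow> int" where "x i v = (if i \<in> {1..k} \<and> v \<in> f i then 1 else 0)" for i v
  define z :: "nat \<Rightarrow> int" where "z i = (if i \<in> {1..k} then 1 else 0)" for i
  have feas: "FN_feasible V E x z"
    unfolding FN_feasible_def
  proof (intro conjI ballI)
    fix i v show "x i v \<in> {0,1}" unfolding x_def by simp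
  next
    fix i show "z i \<in> {0,1}" unfolding z_def by simp
  next
    fix i assume i: "i \<in> {1..?n}"
    show "z i - (\<Sum>u\<in>V. x i u) \<le> 0"
    proof (cases "i \<in> {1..k}")
      case True
      then obtain v where v: "v \<in> f i" "v \<in> V" using forts[OF True] unfolding is_fort_def by blast
      have "x i v \<le> (\<Sum>u\<in>V. x i u)"
        by (rule member_le_sum) (use v fin in \<open>auto simp: x_def\<close>)
      moreover have "x i v = 1" using v True unfolding x_def by simp
      ultimately show ?thesis using True unfolding z_def by simp
    next
      case False
      have "0 \<le> (\<Sum>u\<in>V. x i u)" by (rule sum_nonneg) (simp add: x_def)
      moreover have "z i = 0" using False unfolding z_def by simp
      ultimately show ?thesis by simp
    qed
  next
    fix i v u assume i: "i \<in> {1..?n}" and v: "v \<in> V" and u: "u \<in> nbhd V E v"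
    have nn: "0 \<le> (\<Sum>w \<in> nbhd V E u - {v}. x i w)" by (rule sum_nonneg) (simp add: x_def)
    show "x i u - x i v + (\<Sum>w \<in> nbhd V E u - {v}. x i w) \<ge> 0"
    proof (cases "i \<in> {1..k} \<and> v \<in> f i \<and> u \<notin> f i")
      case True
      hence fi: "is_fort V E (f i)" using forts by blast
      have uV: "u \<in> V" "E v u" using u unfolding nbhd_def by auto
      hence "E u v" using G unfolding simple_graph_def by blast
      hence vin: "v \<in> nbhd V E u \<inter> f i" using v True unfolding nbhd_def by blast
      have "card (nbhd V E u \<inter> f i) \<noteq> 1" using fi uV True unfolding is_fort_def by blast
      hence "\<exists>w \<in> nbhd V E u \<inter> f i. w \<noteq> v"
      proof (rule contrapos_np)
        assume "\<not> (\<exists>w \<in> nbhd V E u \<inter> f i. w \<noteq> v)"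
        hence "nbhd V E u \<inter> f i = {v}" using vin by blast
        then show "card (nbhd V E u \<inter> f i) = 1" by simp
      qed
      then obtain w where w: "w \<in> nbhd V E u \<inter> f i" "w \<noteq> v" by blast
      have "x i w \<le> (\<Sum>w \<in> nbhd V E u - {v}. x i w)"
        by (rule member_le_sum) (use w fin in \<open>auto simp: x_def nbhd_def\<close>)
      moreover have "x i w = 1" using w True unfolding x_def by simp
      moreover have "x i u = 0" "x i v = 1" using True unfolding x_def by simp_all
      ultimately show ?thesis by linarith
    next
      case False
      have "x i u \<ge> 0" unfolding x_def by simp
      moreover have "x i v = 0 \<or> x i u = 1" using False unfolding x_def by auto
      moreover have "x i v \<le> 1" unfolding x_def by simp
      ultimately show ?thesis using nn by linarith
    qed
  next
    fix u assume u: "u \<in> V"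
    have "(\<Sum>i=1..?n. x i u) = int (card {i \<in> {1..?n}. i \<in> {1..k} \<and> u \<in> f i})"
      unfolding x_def by (rule sum_ind_card) simp
    moreover have "card {i \<in> {1..?n}. i \<in> {1..k} \<and> u \<in> f i} \<le> Suc 0"
      by (subst card_le_Suc0_iff_eq) (use disj in auto)
    ultimately show "(\<Sum>i=1..?n. x i u) \<le> 1" by simp
  qed
  have "(\<Sum>i=1..?n. z i) = int (card {i \<in> {1..?n}. i \<in> {1..k}})"
    unfolding z_def by (rule sum_ind_card) simp
  also have "{i \<in> {1..?n}. i \<in> {1..k}} = {1..k}" using kn by auto
  finally have "(\<Sum>i=1..?n. z i) = int k" by simp
  then show ?thesis using feas cC unfolding k_def by metis
qed

theorem corollary7p3:
  fixes V :: "'a set" and E :: "'a \<Rightarrow> 'a \<Rightarrow> bool"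
    and x :: "nat \<Rightarrow> 'a \<Rightarrow> int" and z :: "nat \<Rightarrow> int"
  assumes "simple_graph V E"
    and "FN_optimal V E x z"
  shows "int (fort_number V E) = (\<Sum>i=1..card V. z i)"
proof -
  have feas: "FN_feasible V E x z" using assms(2) unfolding FN_optimal_def by blast
  obtain x' z' where f': "FN_feasible V E x' z'" and e: "int (fort_number V E) = (\<Sum>i=1..card V. z' i)"
    using fn_le_feasible[OF assms(1)] by blast
  have "FN_objective V z' \<le> FN_objective V z" using assms(2) f' unfolding FN_optimal_def by blast
  hence "int (fort_number V E) \<le> (\<Sum>i=1..card V. z i)" using e unfolding FN_objective_def by simp
  moreover have "(\<Sum>i=1..card V. z i) \<le> int (fort_number V E)" using feasible_le_fn[OF assms(1) feas] .
  ultimately show ?thesis by simp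
qed

end
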